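(* Let $d\ge2$, $j\in[d-1]$, $\bar{\mathbf p}$ a $j$-critical direction, $(\mathcal G_\tau)=(\mathcal G(n,\tau\bar{\mathbf p}))_\tau$ the associated process, and $\varepsilon>0$ a constant. Then with high probability, any copy $(K,C)$ of $M_{j,k}$ (for any $j\le k\le d$) which exists in $\mathcal G_\tau$ for any $\tau\ge\frac{\varepsilon}{\log n}$ can be extended to a copy $(K,C,w,a)$ of $\hat M_{j,k}$ in $\mathcal G_\tau$.
   Context: Whp = with probability tending to $1$ as $n\to\infty$. Process: for each $k\in[d]$ and each $(k+1)$-subset $K$ of $[n]$ sample independently $t_K$ uniform in $[0,1]$; $\tau_K=t_K/\bar p_k$ (infinite if $\bar p_k=0$); $\mathcal G_\tau$ is the complex of all singletons and all nonempty subsets of sets $K$ with $\tau_K\le\tau$. $j$-critical direction: $\bar{\mathbf p}$ is $j$-admissible if for each $1\le k\le d$ there are real constants $\bar\alpha_k,\bar\gamma_k$ and a function $\bar\beta_k(n)$ with $\bar p_k=\frac{\bar\alpha_k\log n+\bar\beta_k}{n^{k-j+\bar\gamma_k}}(k-j)!$ and (A1) at least one of $\bar\alpha_k,\bar\gamma_k$ zero, neither negative; (A2) if $\bar\alpha_k=0$ then $\bar\beta_k\equiv0$ or $\bar\beta_k>0$ with $\bar\beta_k=o(n^\varepsilon)$, $\bar\beta_k=\omega(n^{-\varepsilon})$ for every constant $\varepsilon>0$; (A3) if $\bar\gamma_k=0$ then $|\bar\beta_k|=o(\log n)$; (A4) some $k\in\{j+1,\dots,d\}$ has $\bar\alpha_k>0$.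 For $j\le k\le d$, $\bar p_k\ne0$: $\bar\lambda_k=j+1-\bar\gamma_k-(k-j+1)\sum_{i=j+1}^d\bar\alpha_i$; $\bar\mu_k=-(k-j+1)\sum_{i=j+1}^d\bar\beta_i/n^{\bar\gamma_i}$ plus $0$ if $\bar p_k>1$, $\log\log n$ if $\bar p_k\le1,\bar\alpha_k\ne0$, $\log\bar\beta_k$ if $\bar p_k\le1,\bar\alpha_k=0$; $\bar\nu_k=-\log((j+1)!)$ if $k=j$, $-\log(j!)-\log(k-j+1)+\log\bar\alpha_k$ if $k\ne j,\bar\alpha_k\ne0$, $-\log(j!)-\log(k-j+1)$ otherwise. $j$-critical: $j$-admissible with $\bar\lambda_k\log n+\bar\mu_k+\bar\nu_k\le0$ for all such $k$ and equality for some $k$. Copies: a $(j+2)$-set is a $j$-shell if all its $(j+1)$-subsets are $j$-simplices. For $j+1\le k\le d$, $(K,C)$ is a copy of $M_{j,k}$ if $K$ is a $k$-simplex, $C\subset K$, $|C|=j$, and every simplex containing some $C\cup\{x\}$ ($x\in K\setminus C$) lies in $K$; $(K,C,w,a)$ is a copy of $\hat M_{j,k}$ if moreover $w\in K\setminus C$, $a\in[n]\setminus K$ and $C\cup\{w,a\}$ is a $j$-shell. For $k=j$: $(K,C)$ is a copy of $M_{j,j}$ if $K$ is an isolated $j$-simplex (in no other simplex) and $C$ is its first $j$ vertices in increasing order; $(K,C,w,a)$ is a copy of $\hat M_{j,j}$ if moreover $w$ is the last vertex of $K$ and $a\notin K$ with $K\cup\{a\}$ a $j$-shell. *)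

theory Defs
  imports "HOL-Probability.Probability" "HOL-Library.Landau_Symbols"
begin

text \<open>A direction is p :: nat => nat => real, p k n being the k-th coordinate
  of the direction vector for n vertices (k = 1..d).
  alpha, gamma :: nat => real are the constants and beta :: nat => nat => real
  the functions beta k n of the admissibility definition.\<close>

definition j_admissible_with ::
  "nat \<Rightarrow> nat \<Rightarrow> (nat \<Rightarrow> nat \<Rightarrow> real) \<Rightarrow> (nat \<Rightarrow> real) \<Rightarrow> (nat \<Rightarrow> nat \<Rightarrow> real) \<Rightarrow> (nat \<Rightarrow> real) \<Rightarrow> bool"
where
  "j_admissible_with d j p \<alpha> \<beta> \<gamma> \<longleftrightarrow>
     (\<forall>k\<in>{1..d}.
        (\<forall>n. p k n = (\<alpha> k * ln (real n) + \<beta> k n)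
                      / real n powr (real k - real j + \<gamma> k) * fact (nat (int k - int j)))
      \<and> \<comment> \<open>(A1)\<close> (\<alpha> k \<ge> 0 \<and> \<gamma> k \<ge> 0 \<and> (\<alpha> k = 0 \<or> \<gamma> k = 0))
      \<and> \<comment> \<open>(A2)\<close> (\<alpha> k = 0 \<longrightarrow>
             ((\<forall>n. \<beta> k n = 0) \<or>
              ((\<forall>n. \<beta> k n > 0) \<and>
               (\<forall>e::real. e > 0 \<longrightarrow>
                   (\<lambda>n. \<beta> k n) \<in> o(\<lambda>n. real n powr e) \<and>
                   (\<lambda>n. \<beta> k n) \<in> \<omega>(\<lambda>n. real n powr (- e))))))
      \<and> \<comment> \<open>(A3)\<close> (\<gamma> k = 0 \<longrightarrow> (\<lambda>n. \<bar>\<beta> k n\<bar>) \<in> o(\<lambda>n. ln (real n))))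
   \<and> \<comment> \<open>(A4)\<close> (\<exists>k\<in>{j+1..d}. \<alpha> k > 0)"

definition lambda_bar :: "nat \<Rightarrow> nat \<Rightarrow> (nat \<Rightarrow> real) \<Rightarrow> (nat \<Rightarrow> real) \<Rightarrow> nat \<Rightarrow> real" where
  "lambda_bar d j \<alpha> \<gamma> k =
     real j + 1 - \<gamma> k - (real k - real j + 1) * (\<Sum>i\<in>{j+1..d}. \<alpha> i)"

definition mu_bar :: "nat \<Rightarrow> nat \<Rightarrow> (nat \<Rightarrow> nat \<Rightarrow> real) \<Rightarrow> (nat \<Rightarrow> real) \<Rightarrow> (nat \<Rightarrow> nat \<Rightarrow> real)
    \<Rightarrow> (nat \<Rightarrow> real) \<Rightarrow> nat \<Rightarrow> nat \<Rightarrow> real" where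
  "mu_bar d j p \<alpha> \<beta> \<gamma> k n =
     - (real k - real j + 1) * (\<Sum>i\<in>{j+1..d}. \<beta> i n / real n powr \<gamma> i)
     + (if p k n > 1 then 0
        else if \<alpha> k \<noteq> 0 then ln (ln (real n))
        else ln (\<beta> k n))"

definition nu_bar :: "nat \<Rightarrow> (nat \<Rightarrow> real) \<Rightarrow> nat \<Rightarrow> real" where
  "nu_bar j \<alpha> k =
     (if k = j then - ln (fact (j + 1))
      else if \<alpha> k \<noteq> 0 then - ln (fact j) - ln (real k - real j + 1) + ln (\<alpha> k)
      else - ln (fact j) - ln (real k - real j + 1))"

definition crit_expr ::
  "nat \<Rightarrow> nat \<Rightarrow> (nat \<Rightarrow> nat \<Rightarrow> real) \<Rightarrow> (nat \<Rightarrow> real) \<Rightarrow> (nat \<Rightarrow> nat \<Rightarrow> real) \<Rightarrow> (nat \<Rightarrow> real)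
    \<Rightarrow> nat \<Rightarrow> nat \<Rightarrow> real" where
  "crit_expr d j p \<alpha> \<beta> \<gamma> k n =
     lambda_bar d j \<alpha> \<gamma> k * ln (real n) + mu_bar d j p \<alpha> \<beta> \<gamma> k n + nu_bar j \<alpha> k"

definition j_critical :: "nat \<Rightarrow> nat \<Rightarrow> (nat \<Rightarrow> nat \<Rightarrow> real) \<Rightarrow> bool" where
  "j_critical d j p \<longleftrightarrow>
     (\<exists>\<alpha> \<beta> \<gamma>. j_admissible_with d j p \<alpha> \<beta> \<gamma>
        \<and> (\<forall>k\<in>{j..d}. p k \<noteq> (\<lambda>_. 0) \<longrightarrow>
              (\<forall>\<^sub>F n in sequentially. crit_expr d j p \<alpha> \<beta> \<gamma> k n \<le> 0))
        \<and> (\<exists>k\<in>{j..d}. p k \<noteq> (\<lambda>_. 0) \<and>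
              (\<forall>\<^sub>F n in sequentially. crit_expr d j p \<alpha> \<beta> \<gamma> k n = 0)))"

definition faces :: "nat \<Rightarrow> nat \<Rightarrow> nat set set" where
  "faces d n = {K. K \<subseteq> {1..n} \<and> 2 \<le> card K \<and> card K \<le> d + 1}"

text \<open>Probability space of the i.i.d. uniform labels t_K.\<close>
definition proc_space :: "nat \<Rightarrow> nat \<Rightarrow> (nat set \<Rightarrow> real) measure" where
  "proc_space d n = PiM (faces d n) (\<lambda>_. uniform_measure lborel {0..1::real})"

definition tauK :: "(nat \<Rightarrow> nat \<Rightarrow> real) \<Rightarrow> nat \<Rightarrow> (nat set \<Rightarrow> real) \<Rightarrow> nat set \<Rightarrow> ereal" where
  "tauK p n t K =
     (if p (card K - 1) n = 0 then \<infinity> else ereal (t K / p (card K - 1) n))"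

definition cplx :: "nat \<Rightarrow> nat \<Rightarrow> (nat \<Rightarrow> nat \<Rightarrow> real) \<Rightarrow> (nat set \<Rightarrow> real) \<Rightarrow> real \<Rightarrow> nat set set" where
  "cplx d n p t \<tau> =
     {{v} | v. v \<in> {1..n}} \<union>
     {\<sigma>. \<sigma> \<noteq> {} \<and> (\<exists>K\<in>faces d n. tauK p n t K \<le> ereal \<tau> \<and> \<sigma> \<subseteq> K)}"

definition is_shell :: "nat \<Rightarrow> nat set set \<Rightarrow> nat \<Rightarrow> nat set \<Rightarrow> bool" where
  "is_shell n G j S \<longleftrightarrow> S \<subseteq> {1..n} \<and> card S = j + 2 \<and> (\<forall>T\<subseteq>S. card T = j + 1 \<longrightarrow> T \<in> G)"

definition copyM :: "nat set set \<Rightarrow> nat \<Rightarrow> nat \<Rightarrow> nat set \<Rightarrow> nat set \<Rightarrow> bool" where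
  "copyM G j k K C \<longleftrightarrow>
     (if k = j then
        K \<in> G \<and> card K = j + 1 \<and> (\<forall>\<sigma>\<in>G. K \<subseteq> \<sigma> \<longrightarrow> \<sigma> = K) \<and> C = K - {Max K}
      else
        K \<in> G \<and> card K = k + 1 \<and> C \<subseteq> K \<and> card C = j \<and>
        (\<forall>\<sigma>\<in>G. \<forall>x\<in>K - C. insert x C \<subseteq> \<sigma> \<longrightarrow> \<sigma> \<subseteq> K))"

definition copyMhat :: "nat \<Rightarrow> nat set set \<Rightarrow> nat \<Rightarrow> nat \<Rightarrow> nat set \<Rightarrow> nat set \<Rightarrow> nat \<Rightarrow> nat \<Rightarrow> bool" where
  "copyMhat n G j k K C w a \<longleftrightarrow>
     copyM G j k K C \<and> a \<in> {1..n} - K \<and>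
     (if k = j then w = Max K \<and> is_shell n G j (insert a K)
      else w \<in> K - C \<and> is_shell n G j (C \<union> {w, a}))"

end

theory Submission
  imports Defs "HOL-Real_Asymp.Real_Asymp"
begin


abbreviation "U01 \<equiv> uniform_measure lborel {0..1::real}"

lemma prob_space_U01: "prob_space U01"
  by (intro prob_space_uniform_measure) auto

lemma indep_coords:
  fixes I :: "'i set"
  shows "prob_space.indep_vars (PiM I (\<lambda>_. U01)) (\<lambda>_. U01) (\<lambda>i \<omega>. \<omega> i) I"
proof -
  interpret MP: prob_space "PiM I (\<lambda>_. U01)"
    by (intro prob_space_PiM prob_space_U01)
  show ?thesis
  proof (cases "I = {}")
    case True
    show ?thesis unfolding MP.indep_vars_def MP.indep_sets_def using True by simp
  next
    case False
    have rv: "\<And>i. i \<in> I \<Longrightarrow> MP.random_variable U01 (\<lambda>\<omega>. \<omega> i)"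
      by simp
    show ?thesis
    proof (subst MP.indep_vars_iff_distr_eq_PiM'[OF False rv])
      have "distr (PiM I (\<lambda>_. U01)) (PiM I (\<lambda>_. U01)) (\<lambda>x. restrict (\<lambda>i. x i) I)
          = distr (PiM I (\<lambda>_. U01)) (PiM I (\<lambda>_. U01)) (\<lambda>x. x)"
        by (intro distr_cong) (auto simp: space_PiM)
      also have "\<dots> = PiM I (\<lambda>_. U01)" by simp
      also have "\<dots> = PiM I (\<lambda>i. distr (PiM I (\<lambda>_. U01)) U01 (\<lambda>\<omega>. \<omega> i))"
        by (intro PiM_cong refl) (rule distr_PiM_component[symmetric], rule prob_space_U01, assumption)
      finally show "distr (PiM I (\<lambda>_. U01)) (PiM I (\<lambda>_. U01)) (\<lambda>x. restrict (\<lambda>i. x i) I)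
          = PiM I (\<lambda>i. distr (PiM I (\<lambda>_. U01)) U01 (\<lambda>\<omega>. \<omega> i))" .
    qed
  qed
qed

lemma indep_prod:
  fixes I :: "'i set" and J :: "'l \<Rightarrow> 'i set" and P :: "'l \<Rightarrow> ('i \<Rightarrow> real) \<Rightarrow> bool"
  assumes L: "finite L" and JI: "\<And>l. l \<in> L \<Longrightarrow> J l \<subseteq> I" and disj: "disjoint_family_on J L"
    and dep: "\<And>l t. l \<in> L \<Longrightarrow> P l t = P l (restrict t (J l))"
    and meas: "\<And>l. l \<in> L \<Longrightarrow> Measurable.pred (PiM (J l) (\<lambda>_. U01)) (P l)"
  shows "measure (PiM I (\<lambda>_. U01)) {t\<in>space (PiM I (\<lambda>_. U01)). \<forall>l\<in>L. P l t}
       = (\<Prod>l\<in>L. measure (PiM I (\<lambda>_. U01)) {t\<in>space (PiM I (\<lambda>_. U01)). P l t})"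
proof -
  interpret MP: prob_space "PiM I (\<lambda>_. U01)"
    by (intro prob_space_PiM prob_space_U01)
  have ind: "MP.indep_vars (\<lambda>l. PiM (J l) (\<lambda>_. U01)) (\<lambda>l \<omega>. restrict (\<lambda>i. \<omega> i) (J l)) L"
    by (rule MP.indep_vars_restrict[OF indep_coords JI disj])
  define A where "A l = {u\<in>space (PiM (J l) (\<lambda>_. U01)). P l u}" for l
  have A: "l \<in> L \<Longrightarrow> A l \<in> sets (PiM (J l) (\<lambda>_. U01))" for l
    using meas[of l] unfolding A_def pred_def by simp
  have pre: "(\<lambda>\<omega>. restrict (\<lambda>i. \<omega> i) (J l)) -` A l \<inter> space (PiM I (\<lambda>_. U01))
      = {t\<in>space (PiM I (\<lambda>_. U01)). P l t}" if "l \<in> L" for l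
    using that dep[OF that] JI[OF that] by (auto simp: A_def space_PiM)
  show ?thesis
  proof (cases "L = {}")
    case True
    then show ?thesis using MP.prob_space by simp
  next
    case False
    have "MP.prob (\<Inter>l\<in>L. (\<lambda>\<omega>. restrict (\<lambda>i. \<omega> i) (J l)) -` A l \<inter> space (PiM I (\<lambda>_. U01)))
       = (\<Prod>l\<in>L. MP.prob ((\<lambda>\<omega>. restrict (\<lambda>i. \<omega> i) (J l)) -` A l \<inter> space (PiM I (\<lambda>_. U01))))"
      by (rule MP.indep_varsD_finite[OF ind False L A])
    moreover have "(\<Inter>l\<in>L. (\<lambda>\<omega>. restrict (\<lambda>i. \<omega> i) (J l)) -` A l \<inter> space (PiM I (\<lambda>_. U01)))
        = {t\<in>space (PiM I (\<lambda>_. U01)). \<forall>l\<in>L. P l t}"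
      using pre False by auto
    ultimately show ?thesis using pre by simp
  qed
qed

lemma coord_prob:
  assumes "F \<in> I" "0 \<le> \<theta>" "\<theta> \<le> 1"
  shows "measure (PiM I (\<lambda>_. U01)) {t\<in>space (PiM I (\<lambda>_. U01)). \<theta> < t F} = 1 - \<theta>"
proof -
  have "{t\<in>space (PiM I (\<lambda>_. U01)). \<theta> < t F} = (\<lambda>\<omega>. \<omega> F) -` {\<theta><..} \<inter> space (PiM I (\<lambda>_. U01))"
    by auto
  also have "measure (PiM I (\<lambda>_. U01)) \<dots> = measure (distr (PiM I (\<lambda>_. U01)) U01 (\<lambda>\<omega>. \<omega> F)) {\<theta><..}"
    by (rule measure_distr[symmetric]) (use assms in auto)
  also have "distr (PiM I (\<lambda>_. U01)) U01 (\<lambda>\<omega>. \<omega> F) = U01"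
    by (rule distr_PiM_component[OF prob_space_U01 assms(1)])
  also have "measure U01 {\<theta><..} = measure lborel ({0..1} \<inter> {\<theta><..}) / measure lborel {0..1::real}"
    by (rule measure_uniform_measure) auto
  also have "{0..1} \<inter> {\<theta><..} = {\<theta><..1::real}" using assms by auto
  finally show ?thesis using assms by simp
qed

lemma pred_coord:
  assumes "F \<in> J"
  shows "Measurable.pred (PiM J (\<lambda>_. U01)) (\<lambda>t. \<theta> < t F)"
  using assms by measurable

lemma compl_prob:
  assumes "Measurable.pred (PiM I (\<lambda>_. U01)) Q"
  shows "measure (PiM I (\<lambda>_. U01)) {t\<in>space (PiM I (\<lambda>_. U01)). \<not> Q t}
       = 1 - measure (PiM I (\<lambda>_. U01)) {t\<in>space (PiM I (\<lambda>_. U01)). Q t}"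
proof -
  interpret MP: prob_space "PiM I (\<lambda>_. U01)"
    by (intro prob_space_PiM prob_space_U01)
  have "{t\<in>space (PiM I (\<lambda>_. U01)). \<not> Q t} = space (PiM I (\<lambda>_. U01)) - {t\<in>space (PiM I (\<lambda>_. U01)). Q t}"
    by auto
  then show ?thesis using MP.prob_compl[of "{t\<in>space (PiM I (\<lambda>_. U01)). Q t}"] assms
    by (simp add: pred_def)
qed

lemma pred_all_coord:
  assumes "finite Rs" "\<And>R. R \<in> Rs \<Longrightarrow> G R \<in> J"
  shows "Measurable.pred (PiM J (\<lambda>_. U01)) (\<lambda>t. \<forall>R\<in>Rs. \<theta> < t (G R))"
  by (rule pred_intros_finite(3)[OF assms(1)]) (rule pred_coord[OF assms(2)])

lemma pred_ex_all_coord: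
  assumes "finite S" "finite Rs" "\<And>s R. s \<in> S \<Longrightarrow> R \<in> Rs \<Longrightarrow> G s R \<in> J"
  shows "Measurable.pred (PiM J (\<lambda>_. U01)) (\<lambda>t. \<exists>s\<in>S. \<forall>R\<in>Rs. \<theta> < t (G s R))"
  by (rule pred_intros_finite(4)[OF assms(1)]) (rule pred_all_coord[OF assms(2) assms(3)])

lemma pred_all_ex_all_coord:
  assumes "finite A" "finite S" "finite Rs" "\<And>a s R. a \<in> A \<Longrightarrow> s \<in> S \<Longrightarrow> R \<in> Rs \<Longrightarrow> G a s R \<in> J"
  shows "Measurable.pred (PiM J (\<lambda>_. U01)) (\<lambda>t. \<forall>a\<in>A. \<exists>s\<in>S. \<forall>R\<in>Rs. \<theta> < t (G a s R))"
  by (rule pred_intros_finite(3)[OF assms(1)]) (rule pred_ex_all_coord[OF assms(2,3) assms(4)])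

lemma bad_prob:
  fixes F :: "'a \<Rightarrow> 'b \<Rightarrow> 'c \<Rightarrow> 'i"
  assumes fin: "finite A" "finite S" "finite Rs"
    and FI: "\<And>a s R. a \<in> A \<Longrightarrow> s \<in> S \<Longrightarrow> R \<in> Rs \<Longrightarrow> F a s R \<in> I"
    and inj: "\<And>a s R a' s' R'. a \<in> A \<Longrightarrow> s \<in> S \<Longrightarrow> R \<in> Rs \<Longrightarrow> a' \<in> A \<Longrightarrow> s' \<in> S \<Longrightarrow> R' \<in> Rs
        \<Longrightarrow> F a s R = F a' s' R' \<Longrightarrow> a = a' \<and> s = s' \<and> R = R'"
    and th: "0 \<le> \<theta>" "\<theta> \<le> 1"
  shows "measure (PiM I (\<lambda>_. U01)) {t\<in>space (PiM I (\<lambda>_. U01)). \<forall>a\<in>A. \<exists>s\<in>S. \<forall>R\<in>Rs. \<theta> < t (F a s R)}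
     = (1 - (1 - (1 - \<theta>) ^ card Rs) ^ card S) ^ card A"
proof -
  let ?M = "PiM I (\<lambda>_. U01)"
  have L1: "measure ?M {t\<in>space ?M. \<forall>R\<in>Rs. \<theta> < t (F a s R)} = (1 - \<theta>) ^ card Rs"
    if a: "a \<in> A" and s: "s \<in> S" for a s
  proof -
    have "measure ?M {t\<in>space ?M. \<forall>R\<in>Rs. \<theta> < t (F a s R)}
       = (\<Prod>R\<in>Rs. measure ?M {t\<in>space ?M. \<theta> < t (F a s R)})"
    proof (rule indep_prod[where J="\<lambda>R. {F a s R}"])
      show "disjoint_family_on (\<lambda>R. {F a s R}) Rs"
        unfolding disjoint_family_on_def using inj a s by blast
      show "Measurable.pred (Pi\<^sub>M {F a s R} (\<lambda>_. U01)) (\<lambda>t. \<theta> < t (F a s R))" for R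
        by (rule pred_coord) simp
    qed (use fin FI a s in auto)
    also have "\<dots> = (\<Prod>R\<in>Rs. 1 - \<theta>)"
      by (intro prod.cong refl coord_prob FI a s th)
    finally show ?thesis by simp
  qed
  have L2: "measure ?M {t\<in>space ?M. \<forall>s\<in>S. \<not> (\<forall>R\<in>Rs. \<theta> < t (F a s R))} = (1 - (1 - \<theta>) ^ card Rs) ^ card S"
    if a: "a \<in> A" for a
  proof -
    have "measure ?M {t\<in>space ?M. \<forall>s\<in>S. \<not> (\<forall>R\<in>Rs. \<theta> < t (F a s R))}
       = (\<Prod>s\<in>S. measure ?M {t\<in>space ?M. \<not> (\<forall>R\<in>Rs. \<theta> < t (F a s R))})"
    proof (rule indep_prod[where J="\<lambda>s. F a s ` Rs"])
      show "disjoint_family_on (\<lambda>s. F a s ` Rs) S"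
        unfolding disjoint_family_on_def using inj a by blast
      show "Measurable.pred (Pi\<^sub>M (F a s ` Rs) (\<lambda>_. U01)) (\<lambda>t. \<not> (\<forall>R\<in>Rs. \<theta> < t (F a s R)))" for s
        by (rule pred_intros_logic(2), rule pred_all_coord) (use fin in auto)
    qed (use fin FI a in auto)
    also have "\<dots> = (\<Prod>s\<in>S. 1 - (1 - \<theta>) ^ card Rs)"
    proof (intro prod.cong refl)
      fix s assume s: "s \<in> S"
      have "measure ?M {t\<in>space ?M. \<not> (\<forall>R\<in>Rs. \<theta> < t (F a s R))}
          = 1 - measure ?M {t\<in>space ?M. (\<forall>R\<in>Rs. \<theta> < t (F a s R))}"
        by (rule compl_prob, rule pred_all_coord) (use fin FI a s in auto)
      then show "measure ?M {t\<in>space ?M. \<not> (\<forall>R\<in>Rs. \<theta> < t (F a s R))} = 1 - (1 - \<theta>) ^ card Rs"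
        using L1[OF a s] by simp
    qed
    finally show ?thesis by simp
  qed
  have "measure ?M {t\<in>space ?M. \<forall>a\<in>A. \<exists>s\<in>S. \<forall>R\<in>Rs. \<theta> < t (F a s R)}
     = (\<Prod>a\<in>A. measure ?M {t\<in>space ?M. \<exists>s\<in>S. \<forall>R\<in>Rs. \<theta> < t (F a s R)})"
  proof (rule indep_prod[where J="\<lambda>a. (\<lambda>(s, R). F a s R) ` (S \<times> Rs)"])
    show "disjoint_family_on (\<lambda>a. (\<lambda>(s, R). F a s R) ` (S \<times> Rs)) A"
      unfolding disjoint_family_on_def using inj by fast
    show "Measurable.pred (Pi\<^sub>M ((\<lambda>(s, R). F a s R) ` (S \<times> Rs)) (\<lambda>_. U01)) (\<lambda>t. \<exists>s\<in>S. \<forall>R\<in>Rs. \<theta> < t (F a s R))" for a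
      by (rule pred_ex_all_coord) (use fin in auto)
  next
    have mem: "\<And>a s R. s\<in>S \<Longrightarrow> R\<in>Rs \<Longrightarrow> F a s R \<in> (\<lambda>(s, R). F a s R) ` (S \<times> Rs)" by force
    show "(\<exists>s\<in>S. \<forall>R\<in>Rs. \<theta> < t (F a s R)) = (\<exists>s\<in>S. \<forall>R\<in>Rs. \<theta> < restrict t ((\<lambda>(s, R). F a s R) ` (S \<times> Rs)) (F a s R))" for a t
      using mem by auto
  qed (use fin FI in auto)
  also have "\<dots> = (\<Prod>a\<in>A. 1 - (1 - (1 - \<theta>) ^ card Rs) ^ card S)"
  proof (intro prod.cong refl)
    fix a assume a: "a \<in> A"
    have "measure ?M {t\<in>space ?M. \<not> (\<forall>s\<in>S. \<not> (\<forall>R\<in>Rs. \<theta> < t (F a s R)))}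
        = 1 - measure ?M {t\<in>space ?M. (\<forall>s\<in>S. \<not> (\<forall>R\<in>Rs. \<theta> < t (F a s R)))}"
      by (rule compl_prob, rule pred_intros_finite(3), rule fin, rule pred_intros_logic(2), rule pred_all_coord)
         (use fin FI a in auto)
    then show "measure ?M {t\<in>space ?M. \<exists>s\<in>S. \<forall>R\<in>Rs. \<theta> < t (F a s R)} = 1 - (1 - (1 - \<theta>) ^ card Rs) ^ card S"
      using L2[OF a] by simp
  qed
  finally show ?thesis by simp
qed

definition Pset :: "nat \<Rightarrow> nat \<Rightarrow> (nat \<Rightarrow> nat \<Rightarrow> real) \<Rightarrow> (nat set \<Rightarrow> real) \<Rightarrow> real \<Rightarrow> nat set set" where
  "Pset d n p t \<tau> = {K\<in>faces d n. tauK p n t K \<le> ereal \<tau>}"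

definition cplxQ :: "nat \<Rightarrow> nat set set \<Rightarrow> nat set set" where
  "cplxQ n Q = {{v} | v. v \<in> {1..n}} \<union> {\<sigma>. \<sigma> \<noteq> {} \<and> (\<exists>K\<in>Q. \<sigma> \<subseteq> K)}"

lemma cplx_eq: "cplx d n p t \<tau> = cplxQ n (Pset d n p t \<tau>)"
  unfolding cplx_def cplxQ_def Pset_def by auto

lemma finite_faces: "finite (faces d n)"
  unfolding faces_def by (rule finite_subset[of _ "Pow {1..n}"]) auto

lemma rat_above:
  fixes Fs :: "ereal set"
  assumes "finite Fs" "\<forall>x\<in>Fs. ereal \<tau> < x"
  shows "\<exists>q::rat. \<tau> < of_rat q \<and> (\<forall>x\<in>Fs. ereal (of_rat q) < x)"
  using assms
proof (induction Fs rule: finite_induct)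
  case empty
  obtain r where "r \<in> \<rat>" "\<tau> < r" "r < \<tau> + 1" using Rats_dense_in_real[of \<tau> "\<tau>+1"] by auto
  then show ?case by (auto elim!: Rats_cases)
next
  case (insert x Fs)
  then obtain q0 :: rat where q0: "\<tau> < of_rat q0" "\<forall>y\<in>Fs. ereal (of_rat q0) < y" by auto
  show ?case
  proof (cases x)
    case (real r)
    with insert have "\<tau> < r" by auto
    then obtain r' where "r' \<in> \<rat>" "\<tau> < r'" "r' < min r (of_rat q0)"
      using Rats_dense_in_real[of \<tau> "min r (of_rat q0)"] q0 by auto
    then obtain q where "r' = of_rat q" by (auto elim!: Rats_cases)
    then show ?thesis using q0 \<open>\<tau> < r'\<close> \<open>r' < min r (of_rat q0)\<close> real
      by (intro exI[of _ q]) (auto intro: less_trans[of _ "ereal (of_rat q0)"])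
  next
    case PInf
    then show ?thesis using q0 by auto
  next
    case MInf
    with insert show ?thesis by auto
  qed
qed

lemma Pset_rat:
  "\<exists>q::rat. \<tau> \<le> of_rat q \<and> Pset d n p t (of_rat q) = Pset d n p t \<tau>"
proof -
  let ?Fs = "(\<lambda>K. tauK p n t K) ` (faces d n - Pset d n p t \<tau>)"
  have "\<forall>x\<in>?Fs. ereal \<tau> < x" unfolding Pset_def by auto
  then obtain q :: rat where q: "\<tau> < of_rat q" "\<forall>x\<in>?Fs. ereal (of_rat q) < x"
    using rat_above[of ?Fs \<tau>] finite_faces by auto
  have "Pset d n p t (of_rat q) = Pset d n p t \<tau>"
  proof
    show "Pset d n p t (of_rat q) \<subseteq> Pset d n p t \<tau>"
    proof
      fix K assume K: "K \<in> Pset d n p t (of_rat q)"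
      show "K \<in> Pset d n p t \<tau>"
      proof (rule ccontr)
        assume "K \<notin> Pset d n p t \<tau>"
        then have "ereal (of_rat q) < tauK p n t K" using K q(2) by (auto simp: Pset_def)
        then show False using K by (auto simp: Pset_def)
      qed
    qed
    show "Pset d n p t \<tau> \<subseteq> Pset d n p t (of_rat q)"
      using q(1) by (auto simp: Pset_def intro: order.trans)
  qed
  then show ?thesis using q(1) by (intro exI[of _ q]) auto
qed

lemma pred_tauK:
  assumes "K \<in> faces d n"
  shows "Measurable.pred (proc_space d n) (\<lambda>t. tauK p n t K \<le> ereal q)"
  unfolding tauK_def proc_space_def using assms by measurable

lemma meas_Pset:
  "(\<lambda>t. Pset d n p t q) \<in> measurable (proc_space d n) (count_space (Pow (faces d n)))"
proof (subst measurable_count_space_eq2)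
  show "finite (Pow (faces d n))" using finite_faces by simp
  show "(\<lambda>t. Pset d n p t q) \<in> space (proc_space d n) \<rightarrow> Pow (faces d n) \<and>
    (\<forall>a\<in>Pow (faces d n). (\<lambda>t. Pset d n p t q) -` {a} \<inter> space (proc_space d n) \<in> sets (proc_space d n))"
  proof (intro conjI ballI)
    show "(\<lambda>t. Pset d n p t q) \<in> space (proc_space d n) \<rightarrow> Pow (faces d n)" by (auto simp: Pset_def)
    fix Q assume "Q \<in> Pow (faces d n)"
    then have Q: "Q \<subseteq> faces d n" by simp
    have "(\<lambda>t. Pset d n p t q) -` {Q} \<inter> space (proc_space d n)
       = {t \<in> space (proc_space d n). \<forall>K\<in>faces d n. (tauK p n t K \<le> ereal q) = (K \<in> Q)}"
      using Q by (auto simp: Pset_def)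
    also have "\<dots> \<in> sets (proc_space d n)"
      by (rule predE, rule pred_intros_finite(3)[OF finite_faces], rule pred_intros_logic(6),
          rule pred_tauK, assumption, simp)
    finally show "(\<lambda>t. Pset d n p t q) -` {Q} \<inter> space (proc_space d n) \<in> sets (proc_space d n)" .
  qed
qed

lemma pred_Pset:
  "Measurable.pred (proc_space d n) (\<lambda>t. \<Phi> (Pset d n p t q))"
proof -
  have "{t \<in> space (proc_space d n). \<Phi> (Pset d n p t q)}
      = (\<lambda>t. Pset d n p t q) -` {Q\<in>Pow (faces d n). \<Phi> Q} \<inter> space (proc_space d n)"
    using meas_Pset[of d n p q] by (auto simp: Pset_def)
  also have "\<dots> \<in> sets (proc_space d n)"
    by (rule measurable_sets[OF meas_Pset]) auto
  finally show ?thesis by (simp add: pred_def)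
qed

lemma target_sets:
  "{t \<in> space (proc_space d n). \<forall>\<tau>::real. \<tau> \<ge> \<tau>0 \<longrightarrow> \<Phi> (Pset d n p t \<tau>)} \<in> sets (proc_space d n)"
proof -
  have "{t \<in> space (proc_space d n). \<forall>\<tau>::real. \<tau> \<ge> \<tau>0 \<longrightarrow> \<Phi> (Pset d n p t \<tau>)}
      = {t \<in> space (proc_space d n). \<forall>q::rat. of_rat q \<ge> \<tau>0 \<longrightarrow> \<Phi> (Pset d n p t (of_rat q))}"
  proof (intro Collect_cong conj_cong refl iffI allI impI)
    fix t \<tau> assume h: "\<forall>q::rat. of_rat q \<ge> \<tau>0 \<longrightarrow> \<Phi> (Pset d n p t (of_rat q))" and "\<tau>0 \<le> \<tau>"
    obtain q :: rat where "\<tau> \<le> of_rat q" "Pset d n p t (of_rat q) = Pset d n p t \<tau>"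
      using Pset_rat by blast
    moreover have "\<tau>0 \<le> of_rat q" using \<open>\<tau>0 \<le> \<tau>\<close> \<open>\<tau> \<le> of_rat q\<close> by linarith
    ultimately show "\<Phi> (Pset d n p t \<tau>)" using h by metis
  qed auto
  also have "\<dots> \<in> sets (proc_space d n)"
    by (rule predE, rule pred_intros_countable(1), rule pred_intros_imp', rule pred_Pset)
  finally show ?thesis .
qed



lemma cplx_sub: "\<sigma> \<in> cplx d n p t \<tau> \<Longrightarrow> \<sigma> \<subseteq> {1..n}"
  unfolding cplx_def faces_def by blast



lemma cplx_down: "\<sigma> \<in> cplx d n p t \<tau> \<Longrightarrow> T \<subseteq> \<sigma> \<Longrightarrow> T \<noteq> {} \<Longrightarrow> T \<in> cplx d n p t \<tau>"
proof -
  assume a: "\<sigma> \<in> cplx d n p t \<tau>" "T \<subseteq> \<sigma>" "T \<noteq> {}"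
  show ?thesis
  proof (cases "\<exists>v. \<sigma> = {v} \<and> v \<in> {1..n}")
    case True
    then obtain v where "\<sigma> = {v}" "v \<in> {1..n}" by blast
    then have "T = {v}" using a by (auto dest: subset_singletonD)
    then show ?thesis using \<open>v \<in> {1..n}\<close> unfolding cplx_def by blast
  next
    case False
    then obtain K where "K \<in> faces d n" "tauK p n t K \<le> ereal \<tau>" "\<sigma> \<subseteq> K"
      using a(1) unfolding cplx_def by blast
    then show ?thesis using a unfolding cplx_def by blast
  qed
qed

lemma cplx_face: "F \<in> faces d n \<Longrightarrow> tauK p n t F \<le> ereal \<tau> \<Longrightarrow> T \<subseteq> F \<Longrightarrow> T \<noteq> {} \<Longrightarrow> T \<in> cplx d n p t \<tau>"
  unfolding cplx_def by (rule UnI2) (auto intro!: bexI[of _ F])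




lemma pigeon:
  assumes "finite K" "card K < g" "disjoint_family_on Ag {..<g}"
  shows "\<exists>i<g. Ag i \<inter> K = {}"
proof (rule ccontr)
  assume "\<not> (\<exists>i<g. Ag i \<inter> K = {})"
  then have "\<forall>i\<in>{..<g}. \<exists>x. x \<in> Ag i \<inter> K" by blast
  then obtain f where f: "\<And>i. i \<in> {..<g} \<Longrightarrow> f i \<in> Ag i \<inter> K" by (rule bchoice[elim_format]) blast
  have "inj_on f {..<g}"
  proof (rule inj_onI)
    fix x y assume xy: "x \<in> {..<g}" "y \<in> {..<g}" "f x = f y"
    show "x = y"
    proof (rule ccontr)
      assume "x \<noteq> y"
      then have "Ag x \<inter> Ag y = {}" using assms(3) xy unfolding disjoint_family_on_def by blast
      moreover have "f x \<in> Ag x" "f x \<in> Ag y" using f[OF xy(1)] f[OF xy(2)] xy(3) by auto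
      ultimately show False by blast
    qed
  qed
  moreover have "f ` {..<g} \<subseteq> K" using f by blast
  ultimately have "card {..<g} \<le> card K" using card_inj_on_le assms(1) by blast
  then show False using assms(2) by simp
qed


lemma shell_lemma:
  assumes S: "S \<subseteq> {1..n}" "card S = j + 1" "S \<in> G"
    and a: "a \<in> {1..n}" "a \<notin> S"
    and sh: "\<And>s. s \<in> S \<Longrightarrow> insert a (S - {s}) \<in> G"
  shows "is_shell n G j (insert a S)"
  unfolding is_shell_def
proof (intro conjI allI impI)
  have fS: "finite S" using S(1) finite_subset by blast
  show "insert a S \<subseteq> {1..n}" using S a by auto
  show "card (insert a S) = j + 2" using fS a S by simp
  fix T assume T: "T \<subseteq> insert a S" "card T = j + 1"
  show "T \<in> G"
  proof (cases "a \<in> T")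
    case False
    then have "T \<subseteq> S" using T by blast
    then have "T = S" using card_subset_eq[OF fS] T S by simp
    then show ?thesis using S by simp
  next
    case True
    have sub: "T - {a} \<subseteq> S" using T by blast
    have cT: "card (T - {a}) = j" using T True by (simp add: card_Diff_singleton)
    have "T - {a} \<noteq> S" using cT S by auto
    then obtain s where s: "s \<in> S" "s \<notin> T - {a}" using sub by blast
    have sub2: "T - {a} \<subseteq> S - {s}" using sub s by blast
    have "card (S - {s}) = j" using S s fS by (simp add: card_Diff_singleton)
    then have "T - {a} = S - {s}" using card_subset_eq[OF _ sub2] fS cT by simp
    then have "T = insert a (S - {s})" using True by blast
    then show ?thesis using sh[OF s(1)] by simp
  qed
qed




lemma Fc_face:
  assumes jm: "j + 1 \<le> m" "m \<le> d"
    and S: "S \<subseteq> {1..n}" "card S = j + 1" "s \<in> S"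
    and a: "a \<in> {1..n}" "a \<notin> S" "a \<notin> Xs"
    and Xs: "Xs \<subseteq> {1..n}"
    and R: "R \<subseteq> Xs - S" "card R = m - j"
  shows "(S - {s}) \<union> {a} \<union> R \<in> faces d n" "card ((S - {s}) \<union> {a} \<union> R) = m + 1"
proof -
  have fS: "finite S" using finite_subset[OF S(1)] by simp
  have fR: "finite R" using finite_subset[of R "{1..n}"] R(1) Xs by auto
  have c1: "card (S - {s}) = j" using S fS by (simp add: card_Diff_singleton)
  have c2: "card ((S - {s}) \<union> {a}) = j + 1" using c1 a fS by simp
  have dis: "((S - {s}) \<union> {a}) \<inter> R = {}" using R a by blast
  have fSa: "finite ((S - {s}) \<union> {a})" using fS by blast
  have "card ((S - {s}) \<union> {a} \<union> R) = card ((S - {s}) \<union> {a}) + card R"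
    by (rule card_Un_disjoint[OF fSa fR dis])
  then show c: "card ((S - {s}) \<union> {a} \<union> R) = m + 1" using c2 R jm by simp
  have "(S - {s}) \<union> {a} \<union> R \<subseteq> {1..n}" using S(1) a(1) R(1) Xs by blast
  then show "(S - {s}) \<union> {a} \<union> R \<in> faces d n"
    unfolding faces_def using c jm by simp
qed



lemma good_target:
  fixes t :: "nat set \<Rightarrow> real" and Xs :: "nat set" and Ag :: "nat \<Rightarrow> nat set"
  assumes jm: "j + 1 \<le> m" "m \<le> d" "1 \<le> j"
    and Xs: "Xs \<subseteq> {1..n}"
    and Ag: "\<And>i. i < d + 2 \<Longrightarrow> Ag i \<subseteq> {1..n}" "\<And>i. i < d + 2 \<Longrightarrow> Ag i \<inter> Xs = {}"
    and disj: "disjoint_family_on Ag {..<d+2}"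
    and tau: "\<And>F. F \<in> faces d n \<Longrightarrow> card F = m + 1 \<Longrightarrow> t F \<le> \<theta> \<Longrightarrow> tauK p n t F \<le> ereal \<tau>0"
    and good: "\<And>S i. S \<subseteq> {1..n} \<Longrightarrow> card S = j + 1 \<Longrightarrow> i < d + 2 \<Longrightarrow>
        \<exists>a\<in>Ag i - S. \<forall>s\<in>S. \<exists>R. R \<subseteq> Xs - S \<and> card R = m - j \<and> t ((S - {s}) \<union> {a} \<union> R) \<le> \<theta>"
  shows "\<forall>\<tau>::real. \<tau> \<ge> \<tau>0 \<longrightarrow> (\<forall>k\<in>{j..d}. \<forall>K C. copyM (cplx d n p t \<tau>) j k K C \<longrightarrow>
            (\<exists>w a. copyMhat n (cplx d n p t \<tau>) j k K C w a))"
proof (intro allI impI ballI)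
  fix \<tau> :: real and k K C
  assume \<tau>: "\<tau>0 \<le> \<tau>" and k: "k \<in> {j..d}" and cM: "copyM (cplx d n p t \<tau>) j k K C"
  let ?G = "cplx d n p t \<tau>"
  have ext: "\<exists>a\<in>Ag i - S. is_shell n ?G j (insert a S)"
    if S: "S \<subseteq> {1..n}" "card S = j + 1" "S \<in> ?G" and i: "i < d + 2" for S i
  proof -
    obtain a where a: "a \<in> Ag i - S"
      and aR: "\<forall>s\<in>S. \<exists>R. R \<subseteq> Xs - S \<and> card R = m - j \<and> t ((S - {s}) \<union> {a} \<union> R) \<le> \<theta>"
      using good[OF S(1,2) i] by blast
    have an: "a \<in> {1..n}" "a \<notin> S" "a \<notin> Xs" using a Ag[OF i] by auto
    have "is_shell n ?G j (insert a S)"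
    proof (rule shell_lemma[OF S an(1,2)])
      fix s assume s: "s \<in> S"
      obtain R where R: "R \<subseteq> Xs - S" "card R = m - j" "t ((S - {s}) \<union> {a} \<union> R) \<le> \<theta>"
        using aR s by blast
      note F = Fc_face[OF jm(1,2) S(1,2) s an Xs R(1,2)]
      have "tauK p n t ((S - {s}) \<union> {a} \<union> R) \<le> ereal \<tau>0" by (rule tau[OF F R(3)])
      also have "\<dots> \<le> ereal \<tau>" using \<tau> by simp
      finally show "insert a (S - {s}) \<in> ?G"
        by (rule cplx_face[OF F(1)]) auto
    qed
    then show ?thesis using a by blast
  qed
  show "\<exists>w a. copyMhat n ?G j k K C w a"
  proof (cases "k = j")
    case True
    then have cK: "K \<in> ?G" "card K = j + 1" "C = K - {Max K}" using cM by (auto simp: copyM_def)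
    have Kn: "K \<subseteq> {1..n}" using cK(1) by (rule cplx_sub)
    obtain a where a: "a \<in> Ag 0 - K" "is_shell n ?G j (insert a K)"
      using ext[OF Kn cK(2) cK(1), of 0] by auto
    have "a \<in> {1..n}" using a(1) Ag(1)[of 0] by auto
    moreover have "a \<notin> K" using a(1) by blast
    ultimately have "copyMhat n ?G j k K C (Max K) a"
      unfolding copyMhat_def using cM True a(2) by simp
    then show ?thesis by blast
  next
    case False
    then have cK: "K \<in> ?G" "card K = k + 1" "C \<subseteq> K" "card C = j" using cM by (auto simp: copyM_def)
    have Kn: "K \<subseteq> {1..n}" using cK(1) by (rule cplx_sub)
    have fK: "finite K" using finite_subset[OF Kn] by simp
    have "C \<noteq> K" using cK k by auto
    then obtain w where w: "w \<in> K" "w \<notin> C" using cK(3) by blast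
    have fC: "finite C" using finite_subset[OF cK(3) fK] .
    have S1: "insert w C \<subseteq> {1..n}" using w cK(3) Kn by blast
    have S2: "card (insert w C) = j + 1" using w fC cK(4) by simp
    have S3: "insert w C \<in> ?G" by (rule cplx_down[OF cK(1)]) (use w cK(3) in blast)+
    note S = S1 S2 S3
    obtain i where i: "i < d + 2" "Ag i \<inter> K = {}"
      using pigeon[OF fK _ disj] cK(2) k by auto
    obtain a where a: "a \<in> Ag i - insert w C" "is_shell n ?G j (insert a (insert w C))"
      using ext[OF S i(1)] by blast
    have "a \<in> {1..n}" "a \<notin> K" using a(1) Ag(1)[OF i(1)] i(2) by auto
    moreover have "C \<union> {w, a} = insert a (insert w C)" by auto
    ultimately have "copyMhat n ?G j k K C w a"
      unfolding copyMhat_def using cM False a(2) w by simp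
    then show ?thesis by blast
  qed
qed



lemma bad_bound_arith:
  fixes \<theta> :: real
  assumes th: "0 \<le> \<theta>" "\<theta> \<le> 1" and N: "N0 \<le> N" and c: "e \<le> cA"
  shows "(1 - (1 - (1 - \<theta>) ^ N) ^ (Suc j)) ^ cA \<le> (1 - (1 - (1 - \<theta>) ^ N0) ^ (Suc j)) ^ e"
proof -
  define u where "u = (1 - \<theta>) ^ N"
  define u0 where "u0 = (1 - \<theta>) ^ N0"
  have u: "0 \<le> u" "u \<le> u0" "u0 \<le> 1" unfolding u_def u0_def using th N
    by (auto intro: power_decreasing power_le_one)
  have "u \<le> 1" using u by linarith
  have "(1 - u) ^ Suc j \<le> 1" by (rule power_le_one) (use u \<open>u \<le> 1\<close> in auto)
  then have y1: "0 \<le> 1 - (1 - u) ^ Suc j" by linarith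
  have y2: "1 - (1 - u) ^ Suc j \<le> 1" using u \<open>u \<le> 1\<close> by simp
  have y3: "1 - (1 - u) ^ Suc j \<le> 1 - (1 - u0) ^ Suc j"
    using power_mono[of "1 - u0" "1 - u" "Suc j"] u by simp
  have "(1 - (1 - u) ^ Suc j) ^ cA \<le> (1 - (1 - u) ^ Suc j) ^ e"
    by (rule power_decreasing[OF c y1 y2])
  also have "\<dots> \<le> (1 - (1 - u0) ^ Suc j) ^ e"
    by (rule power_mono[OF y3 y1])
  finally show ?thesis unfolding u_def u0_def .
qed

lemma main_bound:
  fixes d j m n :: nat and p :: "nat \<Rightarrow> nat \<Rightarrow> real" and \<theta> \<tau>0 :: real
  assumes jm: "j + 1 \<le> m" "m \<le> d" "1 \<le> j"
    and pm: "p m n > 0" and th: "\<theta> = \<tau>0 * p m n" "0 \<le> \<theta>" "\<theta> \<le> 1"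
  shows "1 - real (n choose (j+1)) * real (d+2)
          * (1 - (1 - (1 - \<theta>) ^ ((n div 2 - (j+1)) choose (m - j))) ^ (Suc j)) ^ ((n - n div 2) div (d+2) - (j+1))
     \<le> measure (proc_space d n) {t \<in> space (proc_space d n). \<forall>\<tau>::real. \<tau> \<ge> \<tau>0 \<longrightarrow>
          (\<forall>k\<in>{j..d}. \<forall>K C. copyM (cplx d n p t \<tau>) j k K C \<longrightarrow> (\<exists>w a. copyMhat n (cplx d n p t \<tau>) j k K C w a))}"
    (is "_ \<le> measure _ ?Tg")
proof -
  define h where "h = n div 2"
  define b where "b = (n - n div 2) div (d+2)"
  define N0 where "N0 = (h - (j+1)) choose (m - j)"
  define \<rho>0 where "\<rho>0 = (1 - (1 - (1 - \<theta>) ^ N0) ^ (Suc j))"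
  define Xs where "Xs = {1..h}"
  define Ag where "Ag i = {h + i*b + 1 .. h + i*b + b}" for i
  define SS where "SS = {S. S \<subseteq> {1..n} \<and> card S = j + 1}"
  define Rs where "Rs S = {R. R \<subseteq> Xs - S \<and> card R = m - j}" for S
  define Fc where "Fc S a s R = (S - {s}) \<union> {a} \<union> R" for S :: "nat set" and a s R
  define Bad where "Bad S i = {t \<in> space (proc_space d n). \<forall>a\<in>Ag i - S. \<exists>s\<in>S. \<forall>R\<in>Rs S. \<theta> < t (Fc S a s R)}" for S i
  let ?M = "proc_space d n"
  interpret MP: prob_space ?M
    unfolding proc_space_def by (intro prob_space_PiM prob_space_U01)
  have Xs: "Xs \<subseteq> {1..n}" unfolding Xs_def h_def by auto
  have hb: "h + (d+2) * b \<le> n"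
  proof -
    have "(d+2) * b \<le> n - n div 2" unfolding b_def by (rule times_div_less_eq_dividend)
    moreover have "n div 2 \<le> n" by simp
    ultimately show ?thesis unfolding h_def by linarith
  qed
  have Ag1: "Ag i \<subseteq> {1..n}" if "i < d + 2" for i
  proof -
    have "i * b + b \<le> (d+2) * b" using that by (metis add.commute mult_Suc mult_le_mono1 Suc_leI)
    then show ?thesis unfolding Ag_def using hb by auto
  qed
  have Ag2: "Ag i \<inter> Xs = {}" for i unfolding Ag_def Xs_def by auto
  have disj: "disjoint_family_on Ag {..<d+2}"
    unfolding disjoint_family_on_def
  proof (intro ballI impI)
    fix i i' :: nat assume "i \<noteq> i'"
    then consider "i < i'" | "i' < i" by linarith
    then show "Ag i \<inter> Ag i' = {}"
    proof cases
      case 1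
      then have "i * b + b \<le> i' * b" by (metis add.commute mult_Suc mult_le_mono1 Suc_leI)
      then show ?thesis unfolding Ag_def by auto
    next
      case 2
      then have "i' * b + b \<le> i * b" by (metis add.commute mult_Suc mult_le_mono1 Suc_leI)
      then show ?thesis unfolding Ag_def by auto
    qed
  qed
  have cardAg: "card (Ag i) = b" for i unfolding Ag_def by simp
  have tau: "tauK p n t F \<le> ereal \<tau>0" if "F \<in> faces d n" "card F = m + 1" "t F \<le> \<theta>" for t F
  proof -
    have "p (card F - 1) n = p m n" using that(2) by simp
    moreover have "t F / p m n \<le> \<tau>0" using that(3) th pm by (simp add: divide_le_eq)
    ultimately show ?thesis unfolding tauK_def using pm by simp
  qed
  define \<Phi> where "\<Phi> Q = (\<forall>k\<in>{j..d}. \<forall>K C. copyM (cplxQ n Q) j k K C \<longrightarrow> (\<exists>w a. copyMhat n (cplxQ n Q) j k K C w a))" for Q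
  have Tg_eq: "?Tg = {t \<in> space ?M. \<forall>\<tau>::real. \<tau> \<ge> \<tau>0 \<longrightarrow> \<Phi> (Pset d n p t \<tau>)}"
    unfolding \<Phi>_def cplx_eq ..
  have Tg_sets: "?Tg \<in> sets ?M" unfolding Tg_eq by (rule target_sets)
  have FcF: "Fc S a s R \<in> faces d n"
    if "S \<in> SS" "i < d + 2" "a \<in> Ag i - S" "s \<in> S" "R \<in> Rs S" for S i a s R
  proof -
    have a: "a \<in> {1..n}" "a \<notin> S" "a \<notin> Xs" using that(3) Ag1[OF that(2)] Ag2[of i] by auto
    show ?thesis unfolding Fc_def
      by (rule Fc_face(1)[OF jm(1,2) _ _ that(4) a Xs]) (use that(1,5) in \<open>auto simp: SS_def Rs_def\<close>)
  qed
  have finS: "finite S" if "S \<in> SS" for S using that finite_subset[of S "{1..n}"] by (auto simp: SS_def)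
  have finRs: "finite (Rs S)" for S
    by (rule finite_subset[of _ "Pow Xs"]) (auto simp: Rs_def Xs_def)
  have finAg: "finite (Ag i - S)" for i S unfolding Ag_def by simp
  have Bad_sets: "Bad S i \<in> sets ?M" if "S \<in> SS" "i < d + 2" for S i
  proof -
    have "Measurable.pred ?M (\<lambda>t. \<forall>a\<in>Ag i - S. \<exists>s\<in>S. \<forall>R\<in>Rs S. \<theta> < t (Fc S a s R))"
      unfolding proc_space_def
      by (rule pred_all_ex_all_coord[OF finAg finS[OF that(1)] finRs]) (rule FcF[OF that], auto)
    then show ?thesis unfolding Bad_def pred_def .
  qed
  have Bad_prob: "measure ?M (Bad S i) \<le> \<rho>0 ^ (b - (j+1))" if S: "S \<in> SS" and i: "i < d + 2" for S i
  proof -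
    have fS: "finite S" by (rule finS[OF S])
    have cS: "card S = j + 1" using S by (simp add: SS_def)
    have inj: "a = a' \<and> s = s' \<and> R = R'"
      if "a \<in> Ag i - S" "s \<in> S" "R \<in> Rs S" "a' \<in> Ag i - S" "s' \<in> S" "R' \<in> Rs S"
        "Fc S a s R = Fc S a' s' R'" for a s R a' s' R'
    proof -
      have RX: "R \<subseteq> Xs - S" "R' \<subseteq> Xs - S" using that(3,6) by (auto simp: Rs_def)
      have aX: "a \<notin> Xs" "a' \<notin> Xs" using that(1,4) Ag2[of i] by auto
      have "Fc S a s R \<inter> (Ag i - S) = {a}"
        using that(1) RX(1) Ag2[of i] unfolding Fc_def by auto
      moreover have "Fc S a' s' R' \<inter> (Ag i - S) = {a'}"
        using that(4) RX(2) Ag2[of i] unfolding Fc_def by auto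
      ultimately have aa: "a = a'" using that(7) by auto
      have "Fc S a s R \<inter> (Xs - S) = R" using RX(1) aX(1) unfolding Fc_def by auto
      moreover have "Fc S a' s' R' \<inter> (Xs - S) = R'" using RX(2) aX(2) unfolding Fc_def by auto
      ultimately have RR: "R = R'" using that(7) by auto
      have "Fc S a s R \<inter> S = S - {s}" using RX(1) that(1) unfolding Fc_def by auto
      moreover have "Fc S a' s' R' \<inter> S = S - {s'}" using RX(2) that(4) unfolding Fc_def by auto
      ultimately have "S - {s} = S - {s'}" using that(7) by auto
      then have "s = s'" using that(2,5) by blast
      then show ?thesis using aa RR by simp
    qed
    have "measure ?M (Bad S i) = (1 - (1 - (1 - \<theta>) ^ card (Rs S)) ^ card S) ^ card (Ag i - S)"
      unfolding Bad_def proc_space_def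
      by (rule bad_prob[OF finAg fS finRs _ inj th(2,3)]) (rule FcF[OF S i], auto)
    also have "card (Rs S) = card (Xs - S) choose (m - j)"
      unfolding Rs_def by (rule n_subsets) (simp add: Xs_def)
    finally have eq: "measure ?M (Bad S i) = (1 - (1 - (1 - \<theta>) ^ (card (Xs - S) choose (m - j))) ^ Suc j) ^ card (Ag i - S)"
      using cS by simp
    have "h - (j+1) \<le> card (Xs - S)"
      using diff_card_le_card_Diff[OF fS, of Xs] cS by (simp add: Xs_def)
    then have N: "N0 \<le> card (Xs - S) choose (m - j)" unfolding N0_def by (rule binomial_right_mono)
    have c: "b - (j+1) \<le> card (Ag i - S)"
      using diff_card_le_card_Diff[OF fS, of "Ag i"] cS cardAg[of i] by simp
    show ?thesis unfolding eq \<rho>0_def by (rule bad_bound_arith[OF th(2,3) N c])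
  qed
  let ?U = "\<Union>x\<in>SS \<times> {..<d+2}. Bad (fst x) (snd x)"
  have cover: "space ?M - ?U \<subseteq> ?Tg"
  proof
    fix t assume t: "t \<in> space ?M - ?U"
    have good: "\<exists>a\<in>Ag i - S. \<forall>s\<in>S. \<exists>R. R \<subseteq> Xs - S \<and> card R = m - j \<and> t ((S - {s}) \<union> {a} \<union> R) \<le> \<theta>"
      if "S \<subseteq> {1..n}" "card S = j + 1" "i < d + 2" for S i
    proof -
      have "S \<in> SS" using that by (simp add: SS_def)
      then have "t \<notin> Bad S i" using t that(3) by auto
      then show ?thesis using t unfolding Bad_def Rs_def Fc_def by (auto simp: not_less)
    qed
    have "\<forall>\<tau>::real. \<tau> \<ge> \<tau>0 \<longrightarrow> (\<forall>k\<in>{j..d}. \<forall>K C. copyM (cplx d n p t \<tau>) j k K C \<longrightarrow>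
            (\<exists>w a. copyMhat n (cplx d n p t \<tau>) j k K C w a))"
      by (rule good_target[OF jm Xs Ag1 Ag2 disj tau good])
    then show "t \<in> ?Tg" using t by simp
  qed
  have finSS: "finite SS" unfolding SS_def by (rule finite_subset[of _ "Pow {1..n}"]) auto
  have cardSS: "card SS = n choose (j+1)" unfolding SS_def by (subst n_subsets) auto
  have U_sets: "?U \<in> sets ?M"
    using Bad_sets finSS by (intro sets.finite_UN) auto
  have "measure ?M ?U \<le> (\<Sum>x\<in>SS \<times> {..<d+2}. measure ?M (Bad (fst x) (snd x)))"
    by (rule MP.finite_measure_subadditive_finite) (use finSS Bad_sets in auto)
  also have "\<dots> \<le> (\<Sum>x\<in>SS \<times> {..<d+2}. \<rho>0 ^ (b - (j+1)))"
    by (rule sum_mono) (use Bad_prob in auto)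
  also have "\<dots> = real (n choose (j+1)) * real (d+2) * \<rho>0 ^ (b - (j+1))"
    using finSS cardSS by (simp add: card_cartesian_product algebra_simps)
  finally have Ule: "measure ?M ?U \<le> real (n choose (j+1)) * real (d+2) * \<rho>0 ^ (b - (j+1))" .
  have "measure ?M (space ?M - ?U) = 1 - measure ?M ?U"
    by (rule MP.prob_compl[OF U_sets])
  moreover have "measure ?M (space ?M - ?U) \<le> measure ?M ?Tg"
    by (rule MP.finite_measure_mono[OF cover Tg_sets])
  ultimately show ?thesis using Ule unfolding \<rho>0_def N0_def b_def h_def by simp
qed



lemma tail_lim:
  fixes \<kappa> :: real and d j :: nat
  assumes "\<kappa> > 0"
  shows "(\<lambda>n::nat. real n ^ (j+1) * real (d+2) * exp (- \<kappa> * (real n / (2 * real (d+2)) - real j - 2))) \<longlonglongrightarrow> 0"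
  using assms by real_asymp

lemma rho_props:
  fixes c0 :: real
  assumes "c0 > 0"
  shows "0 < 1 - (1 - exp (- c0)) ^ Suc j" "1 - (1 - exp (- c0)) ^ Suc j < 1"
proof -
  have e: "0 < exp (- c0)" "exp (- c0) < 1" using assms by auto
  have "(1 - exp (- c0)) ^ Suc j < 1" using e by (intro power_Suc_less_one) auto
  then show "0 < 1 - (1 - exp (- c0)) ^ Suc j" by simp
  have "0 < (1 - exp (- c0)) ^ Suc j" using e by simp
  then show "1 - (1 - exp (- c0)) ^ Suc j < 1" by simp
qed

lemma bound_n:
  fixes a \<epsilon> \<theta> :: real and r j d n :: nat
  assumes r: "r \<ge> 1" and a: "a > 0" and \<epsilon>: "\<epsilon> > 0"
    and th: "\<epsilon> * (a/2) * fact r / real n ^ r \<le> \<theta>" "\<theta> \<le> 1"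
    and nl: "4 * (j + 2) + 4 * r \<le> n"
  defines "c0 \<equiv> \<epsilon> * (a/2) * fact r / (4 * real r) ^ r"
  defines "\<rho> \<equiv> 1 - (1 - exp (- c0)) ^ Suc j"
  shows "real (n choose (j+1)) * real (d+2) * (1 - (1 - (1 - \<theta>) ^ ((n div 2 - (j+1)) choose r)) ^ (Suc j))
            ^ ((n - n div 2) div (d+2) - (j+1))
         \<le> real n ^ (j+1) * real (d+2) * exp (- (- ln \<rho>) * (real n / (2 * real (d+2)) - real j - 2))"
proof -
  define x where "x = n div 2 - (j+1)"
  define N0 where "N0 = x choose r"
  define b where "b = (n - n div 2) div (d+2)"
  have npos: "real n > 0" using nl by simp
  have c0pos: "c0 > 0" unfolding c0_def using a \<epsilon> r by simp
  have "0 \<le> \<epsilon> * (a/2) * fact r / real n ^ r" using a \<epsilon> by simp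
  then have th0: "0 \<le> \<theta>" using th(1) by linarith
  have nlr: "4 * (real j + 2) + 4 * real r \<le> real n"
  proof -
    have "real (4 * (j + 2) + 4 * r) \<le> real n" using nl by (simp only: of_nat_le_iff)
    then show ?thesis by simp
  qed
  have "2 * (n div 2) + 1 \<ge> n" by linarith
  then have "real n \<le> real (2 * (n div 2) + 1)" by (simp only: of_nat_le_iff)
  then have "real n \<le> 2 * real (n div 2) + 1" by simp
  then have "real (n div 2) \<ge> (real n - 1) / 2" by (simp add: field_simps)
  moreover have "n div 2 \<ge> j + 1" using div_le_mono[of "2*(j+1)" n 2] nl by simp
  ultimately have xge: "real x \<ge> real n / 4" unfolding x_def using nl by (simp add: of_nat_diff)
  have "(0::real) \<le> real j" by simp
  then have "real r \<le> real x" using xge nlr by argo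
  then have rx: "r \<le> x" by simp
  have "(real x / real r) ^ r \<le> real N0" unfolding N0_def by (rule binomial_ge_n_over_k_pow_k[OF rx])
  moreover have "(real n / (4 * real r)) ^ r \<le> (real x / real r) ^ r"
  proof (rule power_mono)
    show "real n / (4 * real r) \<le> real x / real r" using xge r by (simp add: divide_simps)
  qed (use r in simp)
  ultimately have N0ge: "(real n / (4 * real r)) ^ r \<le> real N0" by linarith
  have "c0 = \<epsilon> * (a/2) * fact r / real n ^ r * (real n / (4 * real r)) ^ r"
    unfolding c0_def using npos by (simp add: power_divide power_mult_distrib)
  also have "\<dots> \<le> \<theta> * real N0"
    by (rule mult_mono[OF th(1) N0ge]) (use th0 in auto)
  finally have thN: "c0 \<le> \<theta> * real N0" .
  have "(1 - \<theta>) ^ N0 \<le> exp (- \<theta>) ^ N0"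
    by (rule power_mono) (use th in \<open>auto simp: exp_ge_add_one_self[of "- \<theta>", simplified]\<close>)
  also have "\<dots> = exp (- (\<theta> * real N0))" by (simp add: exp_of_nat_mult[symmetric] mult.commute)
  also have "\<dots> \<le> exp (- c0)" using thN by simp
  finally have xle: "(1 - \<theta>) ^ N0 \<le> exp (- c0)" .
  have x0: "0 \<le> (1 - \<theta>) ^ N0" "(1 - \<theta>) ^ N0 \<le> 1" using th th0 by (auto intro: power_le_one)
  define \<rho>0 where "\<rho>0 = 1 - (1 - (1 - \<theta>) ^ N0) ^ Suc j"
  have "(1 - exp (- c0)) ^ Suc j \<le> (1 - (1 - \<theta>) ^ N0) ^ Suc j"
    by (rule power_mono) (use xle c0pos in auto)
  then have r1: "\<rho>0 \<le> \<rho>" unfolding \<rho>0_def \<rho>_def by simp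
  have "(1 - (1 - \<theta>) ^ N0) ^ Suc j \<le> 1" by (rule power_le_one) (use x0 in auto)
  then have r0: "0 \<le> \<rho>0" unfolding \<rho>0_def by simp
  have \<rho>pos: "0 < \<rho>" "\<rho> < 1" unfolding \<rho>_def using rho_props[OF c0pos] by auto
  define \<kappa> where "\<kappa> = - ln \<rho>"
  have \<rho>exp: "\<rho> = exp (- \<kappa>)" unfolding \<kappa>_def using \<rho>pos by simp
  have m1: "(n - n div 2) mod (d+2) < d+2" by simp
  have m2: "(d+2) * b + (n - n div 2) mod (d+2) = n - n div 2" unfolding b_def by (rule mult_div_mod_eq)
  have "(d+2) * b + (d+2) > n - n div 2" using m1 m2 by linarith
  then have "real ((d+2) * b + (d+2)) > real (n - n div 2)" by (simp only: of_nat_less_iff)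
  moreover have "real (n - n div 2) = real n - real (n div 2)" by (simp add: of_nat_diff)
  moreover have "2 * (n div 2) \<le> n" by simp
  then have "real (2 * (n div 2)) \<le> real n" by (simp only: of_nat_le_iff)
  then have "2 * real (n div 2) \<le> real n" by simp
  ultimately have q1: "real ((d+2) * b + (d+2)) > real n / 2" by linarith
  have "real ((d+2) * b + (d+2)) = real (d+2) * (real b + 1)" by (simp add: algebra_simps)
  with q1 have "real n / 2 < real (d+2) * (real b + 1)" by simp
  then have "real n / 2 < (real b + 1) * real (d+2)" by (simp only: mult.commute)
  moreover have dpos: "0 < real (d+2)" by simp
  ultimately have "real n / 2 / real (d+2) < real b + 1" by (simp only: pos_divide_less_eq[OF dpos])
  moreover have "real n / 2 / real (d+2) = real n / (2 * real (d+2))" by simp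
  ultimately have "real b > real n / (2 * real (d+2)) - 1" by argo
  moreover have "real (b - (j+1)) \<ge> real b - real (j+1)" by linarith
  ultimately have eb: "real (b - (j+1)) \<ge> real n / (2 * real (d+2)) - real j - 2" by simp
  have "\<rho>0 ^ (b - (j+1)) \<le> \<rho> ^ (b - (j+1))" by (rule power_mono[OF r1 r0])
  also have "\<dots> = exp (- \<kappa> * real (b - (j+1)))" unfolding \<rho>exp by (simp add: exp_of_nat_mult[symmetric] mult.commute)
  also have "\<dots> \<le> exp (- \<kappa> * (real n / (2 * real (d+2)) - real j - 2))"
  proof -
    have "\<kappa> > 0" unfolding \<kappa>_def using \<rho>pos by simp
    then show ?thesis using eb by (simp add: mult_left_mono)
  qed
  finally have e1: "\<rho>0 ^ (b - (j+1)) \<le> exp (- \<kappa> * (real n / (2 * real (d+2)) - real j - 2))" .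
  have "real (n choose (j+1)) \<le> real (n ^ (j+1))"
  proof -
    have "4 * j + 8 + 4 * r \<le> n" using nl by (simp add: algebra_simps)
    then have "j + 1 \<le> n" by linarith
    then have "n choose (j+1) \<le> n ^ (j+1)" by (rule binomial_le_pow)
    then show ?thesis by (simp only: of_nat_le_iff)
  qed
  then have e2: "real (n choose (j+1)) \<le> real n ^ (j+1)" by simp
  have "real (n choose (j+1)) * real (d+2) * \<rho>0 ^ (b - (j+1)) \<le> real n ^ (j+1) * real (d+2) * exp (- \<kappa> * (real n / (2 * real (d+2)) - real j - 2))"
    by (intro mult_mono e1 e2) (use r0 in auto)
  then show ?thesis unfolding \<rho>0_def N0_def x_def b_def \<kappa>_def by simp
qed



theorem corollary5p4:
  fixes d j :: nat and p :: "nat \<Rightarrow> nat \<Rightarrow> real" and \<epsilon> :: real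
  assumes "d \<ge> 2" and "1 \<le> j" and "j \<le> d - 1"
    and "j_critical d j p" and "\<epsilon> > 0"
  shows "(\<lambda>n. measure (proc_space d n)
            {t \<in> space (proc_space d n).
               \<forall>\<tau>::real. \<tau> \<ge> \<epsilon> / ln (real n) \<longrightarrow>
                 (\<forall>k\<in>{j..d}. \<forall>K C. copyM (cplx d n p t \<tau>) j k K C \<longrightarrow>
                    (\<exists>w a. copyMhat n (cplx d n p t \<tau>) j k K C w a))})
         \<longlonglongrightarrow> 1"
proof -
  obtain \<alpha> \<beta> \<gamma> where adm: "j_admissible_with d j p \<alpha> \<beta> \<gamma>"
    using assms(4) unfolding j_critical_def by blast
  obtain m where m: "m \<in> {j+1..d}" "\<alpha> m > 0" using adm unfolding j_admissible_with_def by blast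
  have mk: "m \<in> {1..d}" using m assms(2) by auto
  have pform: "p m n = (\<alpha> m * ln (real n) + \<beta> m n) / real n powr (real m - real j + \<gamma> m) * fact (nat (int m - int j))" for n
    using adm mk unfolding j_admissible_with_def by blast
  have "\<alpha> m = 0 \<or> \<gamma> m = 0" using adm mk unfolding j_admissible_with_def by blast
  then have g0: "\<gamma> m = 0" using m by auto
  have A3: "(\<lambda>n. \<bar>\<beta> m n\<bar>) \<in> o(\<lambda>n. ln (real n))" using adm mk g0 unfolding j_admissible_with_def by blast
  define a where "a = \<alpha> m"
  define r where "r = m - j"
  have a: "a > 0" using m by (simp add: a_def)
  have jm: "j + 1 \<le> m" "m \<le> d" "1 \<le> j" using m assms(2) by auto
  have r1: "r \<ge> 1" using jm by (simp add: r_def)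
  have \<epsilon>: "\<epsilon> > 0" by (rule assms(5))
  define c0 where "c0 = \<epsilon> * (a/2) * fact r / (4 * real r) ^ r"
  define \<rho> where "\<rho> = 1 - (1 - exp (- c0)) ^ Suc j"
  define \<kappa> where "\<kappa> = - ln \<rho>"
  have c0pos: "c0 > 0" unfolding c0_def using a \<epsilon> r1 by simp
  have \<rho>pos: "0 < \<rho>" "\<rho> < 1" unfolding \<rho>_def using rho_props[OF c0pos] by auto
  have \<kappa>pos: "\<kappa> > 0" unfolding \<kappa>_def using \<rho>pos by simp
  define g where "g n = real n ^ (j+1) * real (d+2) * exp (- \<kappa> * (real n / (2 * real (d+2)) - real j - 2))" for n :: nat
  have glim: "g \<longlonglongrightarrow> 0" unfolding g_def by (rule tail_lim[OF \<kappa>pos])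
  define Tg where "Tg n = measure (proc_space d n)
            {t \<in> space (proc_space d n).
               \<forall>\<tau>::real. \<tau> \<ge> \<epsilon> / ln (real n) \<longrightarrow>
                 (\<forall>k\<in>{j..d}. \<forall>K C. copyM (cplx d n p t \<tau>) j k K C \<longrightarrow>
                    (\<exists>w a. copyMhat n (cplx d n p t \<tau>) j k K C w a))}" for n
  have ev1: "eventually (\<lambda>n. \<bar>\<beta> m n\<bar> \<le> (a/2) * ln (real n)) sequentially"
  proof -
    have "eventually (\<lambda>n. norm \<bar>\<beta> m n\<bar> \<le> (a/2) * norm (ln (real n))) at_top"
      by (rule landau_o.smallD[OF A3]) (use a in simp)
    moreover have "eventually (\<lambda>n::nat. 1 \<le> n) at_top" by (rule eventually_ge_at_top)
    ultimately show ?thesis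
    proof eventually_elim
      case (elim n)
      then have "ln (real n) \<ge> 0" by simp
      then show ?case using elim by simp
    qed
  qed
  define N1 where "N1 = max (4 * (j + 2) + 4 * r) (nat \<lceil>\<epsilon> * (3 * a / 2) * fact r\<rceil> + 3)"
  have ev2: "eventually (\<lambda>n. N1 \<le> n) sequentially" by (rule eventually_ge_at_top)
  have evmain: "eventually (\<lambda>n. 1 - g n \<le> Tg n) sequentially"
    using ev1 ev2
  proof eventually_elim
    case (elim n)
    have h1: "\<bar>\<beta> m n\<bar> \<le> (a/2) * ln (real n)" by (rule elim(1))
    have nl: "4 * (j + 2) + 4 * r \<le> n" using elim(2) unfolding N1_def by simp
    have n3: "nat \<lceil>\<epsilon> * (3 * a / 2) * fact r\<rceil> + 3 \<le> n" using elim(2) unfolding N1_def by simp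
    have "real (nat \<lceil>\<epsilon> * (3 * a / 2) * fact r\<rceil>) \<ge> \<epsilon> * (3 * a / 2) * fact r" by linarith
    then have nbig: "\<epsilon> * (3 * a / 2) * fact r \<le> real n" using n3 by linarith
    have n3': "3 \<le> n" using n3 by linarith
    then have npos: "real n > 0" by simp
    have lnpos: "ln (real n) > 0" using n3' by simp
    define L where "L = a * ln (real n) + \<beta> m n"
    have L1: "(a/2) * ln (real n) \<le> L" using h1 unfolding L_def by linarith
    have L2: "L \<le> (3*a/2) * ln (real n)" using h1 unfolding L_def by linarith
    have e1: "real m - real j + \<gamma> m = real r" using g0 jm by (simp add: r_def of_nat_diff)
    have e2: "nat (int m - int j) = r" using jm by (simp add: r_def)
    have pmn: "p m n = L / real n ^ r * fact r"
      using pform[of n] unfolding e1 e2 L_def a_def using npos by (simp add: powr_realpow)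
    define q where "q = L / ln (real n)"
    have q1: "a/2 \<le> q" unfolding q_def using L1 lnpos by (simp add: pos_le_divide_eq)
    have q2: "q \<le> 3*a/2" unfolding q_def using L2 lnpos by (simp add: pos_divide_le_eq)
    define \<theta> where "\<theta> = \<epsilon> / ln (real n) * p m n"
    have th_eq: "\<theta> = \<epsilon> * q * fact r / real n ^ r"
      unfolding \<theta>_def pmn q_def using lnpos npos by (simp add: field_simps)
    have pmpos: "p m n > 0" unfolding pmn using L1 a lnpos npos by (smt (verit) divide_pos_pos fact_gt_zero mult_pos_pos zero_less_power)
    have thl: "\<epsilon> * (a/2) * fact r / real n ^ r \<le> \<theta>" unfolding th_eq
      by (intro divide_right_mono mult_right_mono mult_left_mono q1) (use \<epsilon> in auto)
    have "\<theta> \<le> \<epsilon> * (3*a/2) * fact r / real n ^ r" unfolding th_eq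
      by (intro divide_right_mono mult_right_mono mult_left_mono q2) (use \<epsilon> in auto)
    also have "\<dots> \<le> \<epsilon> * (3*a/2) * fact r / real n"
    proof (rule divide_left_mono)
      show "real n \<le> real n ^ r" using power_increasing[of 1 r "real n"] r1 n3' by simp
    qed (use \<epsilon> a npos r1 in auto)
    also have "\<dots> \<le> 1" using nbig npos by simp
    finally have thu: "\<theta> \<le> 1" .
    have th0: "0 \<le> \<theta>" using thl \<epsilon> a by (smt (verit) divide_nonneg_pos fact_ge_zero mult_nonneg_nonneg npos zero_less_power)
    have tt: "\<theta> = \<epsilon> / ln (real n) * p m n" by (simp add: \<theta>_def)
    have MB: "1 - real (n choose (j+1)) * real (d+2)
          * (1 - (1 - (1 - \<theta>) ^ ((n div 2 - (j+1)) choose (m - j))) ^ (Suc j)) ^ ((n - n div 2) div (d+2) - (j+1))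
       \<le> Tg n"
      unfolding Tg_def by (rule main_bound[where p=p and m=m and n=n and d=d and j=j, OF jm pmpos tt th0 thu])
    have BN: "real (n choose (j+1)) * real (d+2) * (1 - (1 - (1 - \<theta>) ^ ((n div 2 - (j+1)) choose r)) ^ (Suc j))
            ^ ((n - n div 2) div (d+2) - (j+1)) \<le> g n"
      unfolding g_def \<kappa>_def \<rho>_def c0_def using bound_n[OF r1 a \<epsilon> thl thu nl, of d] by simp
    show ?case using MB BN unfolding r_def by linarith
  qed
  have evle: "eventually (\<lambda>n. Tg n \<le> 1) sequentially"
  proof (rule always_eventually, rule allI)
    fix n
    interpret MP: prob_space "proc_space d n"
      unfolding proc_space_def by (intro prob_space_PiM prob_space_U01)
    show "Tg n \<le> 1" unfolding Tg_def by (rule MP.prob_le_1)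
  qed
  have "(\<lambda>n. 1 - g n) \<longlonglongrightarrow> 1 - 0" by (intro tendsto_intros glim)
  then have l1: "(\<lambda>n. 1 - g n) \<longlonglongrightarrow> 1" by simp
  have "Tg \<longlonglongrightarrow> 1" by (rule tendsto_sandwich[OF evmain evle l1 tendsto_const])
  then show ?thesis unfolding Tg_def .
qed


end
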